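(* Let $D \subset \mathbb{Z}^m \setminus \{\mathbf{0}\}$ be a finite set with $D = -D$. Then for every non-zero Laurent polynomial \[ f(z_1, \ldots, z_m) = \sum_{d \in D} c_d z_1^{d_1}\cdots z_m^{d_m} \quad \text{with } c_{-d} = \overline{c_d} \text{ for all } d \in D, \] we have $\alpha(D) \leq \min(\rho_+(f), \rho_-(f))$; that is, $\alpha(D) \leq \rho(D)$.
   Context: Such $f$ is real-valued on $\mathbb{T}^m$, $\mathbb{T}$ the unit circle. $\lambda_m$ is the normalized Lebesgue (Haar) measure on $\mathbb{T}^m$ with $\lambda_m(\mathbb{T}^m) = 1$; $\rho_+(f) = \lambda_m(\{z \in \mathbb{T}^m : f(z) > 0\})$ and $\rho_-(f) = \lambda_m(\{z \in \mathbb{T}^m : f(z) < 0\})$. $\rho(D)$ is the least value of $\min(\rho_+(f), \rho_-(f))$ over all such non-zero $f$. The $m$-circulant graph $G_n$ with set of differences $D$ has vertex set $\{0, \ldots, n-1\}^m$, vertices $u, v$ (possibly equal) being adjacent iff $u - v$ is congruent coordinatewise modulo $n$ to some $d \in D$. $\alpha(G)$ is the maximum size of an independent set (no two adjacent vertices, no looped vertex), and $\alpha(D) := \lim_{n \to \infty} \alpha(G_n)/n^m$ (this limit exists). *)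

theory Defs
  imports "HOL-Probability.Probability"
begin

text \<open>Points of \<open>\<int>^m\<close> are functions \<open>'m \<Rightarrow> int\<close> for a finite index type \<open>'m\<close>
  (so \<open>m = CARD('m)\<close>).\<close>

definition torus :: "('m::finite \<Rightarrow> complex) set" where
  "torus = {z. \<forall>j. cmod (z j) = 1}"

definition haar_torus :: "('m::finite \<Rightarrow> complex) measure" where
  "haar_torus = distr (PiM UNIV (\<lambda>_. restrict_space lborel {0..<1::real}))
                      (PiM UNIV (\<lambda>_. borel))
                      (\<lambda>\<theta> j. cis (2 * pi * \<theta> j))"

definition laurent :: "('m::finite \<Rightarrow> int) set \<Rightarrow> (('m \<Rightarrow> int) \<Rightarrow> complex)
    \<Rightarrow> ('m \<Rightarrow> complex) \<Rightarrow> complex" where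
  "laurent D c z = (\<Sum>d\<in>D. c d * (\<Prod>j\<in>UNIV. z j powi d j))"

definition rho_plus :: "(('m::finite \<Rightarrow> complex) \<Rightarrow> complex) \<Rightarrow> real" where
  "rho_plus f = measure haar_torus {z \<in> torus. Re (f z) > 0}"

definition rho_minus :: "(('m::finite \<Rightarrow> complex) \<Rightarrow> complex) \<Rightarrow> real" where
  "rho_minus f = measure haar_torus {z \<in> torus. Re (f z) < 0}"

definition circ_vertices :: "nat \<Rightarrow> ('m::finite \<Rightarrow> int) set" where
  "circ_vertices n = {v. \<forall>j. 0 \<le> v j \<and> v j < int n}"

definition circ_adj :: "('m::finite \<Rightarrow> int) set \<Rightarrow> nat \<Rightarrow> ('m \<Rightarrow> int) \<Rightarrow> ('m \<Rightarrow> int) \<Rightarrow> bool" where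
  "circ_adj D n u v = (\<exists>d\<in>D. \<forall>j. (u j - v j) mod int n = d j mod int n)"

definition circ_independent :: "('m::finite \<Rightarrow> int) set \<Rightarrow> nat \<Rightarrow> ('m \<Rightarrow> int) set \<Rightarrow> bool" where
  "circ_independent D n S = (S \<subseteq> circ_vertices n \<and> (\<forall>u\<in>S. \<forall>v\<in>S. \<not> circ_adj D n u v))"

definition circ_alpha :: "('m::finite \<Rightarrow> int) set \<Rightarrow> nat \<Rightarrow> nat" where
  "circ_alpha D n = Max (card ` {S. circ_independent D n S})"

definition alpha_D :: "('m::finite \<Rightarrow> int) set \<Rightarrow> real" where
  "alpha_D D = lim (\<lambda>n. real (circ_alpha D n) / real n ^ CARD('m))"

end

theory Submission
  imports Defs "HOL-Library.Function_Algebras" "HOL-Computational_Algebra.Polynomial"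
begin

definition ee :: "real \<Rightarrow> complex" where "ee x = cis (2 * pi * x)"

definition idot :: "('m::finite \<Rightarrow> int) \<Rightarrow> ('m \<Rightarrow> int) \<Rightarrow> int" where
  "idot a b = (\<Sum>j\<in>UNIV. a j * b j)"

lemma cis_sum: "cis (sum f A) = (\<Prod>x\<in>A. cis (f x))"
  by (induction A rule: infinite_finite_induct) (auto simp: cis_mult[symmetric])

lemma ee_add: "ee (x + y) = ee x * ee y"
  by (simp add: ee_def cis_mult distrib_left)

lemma ee_int: "ee (of_int k) = 1"
  by (simp add: ee_def)

lemma ee_add_int: "ee (x + of_int k) = ee x"
  by (simp add: ee_add ee_int)

lemma cnj_ee: "cnj (ee x) = ee (- x)"
  by (simp add: ee_def cis_cnj)

lemma ee_sum: "ee (sum f A) = (\<Prod>x\<in>A. ee (f x))"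
  unfolding ee_def by (simp add: sum_distrib_left cis_sum)

lemma ee_eq_1_iff: "ee x = 1 \<longleftrightarrow> x \<in> \<int>"
proof
  assume "ee x = 1"
  then have "cos (2 * pi * x) = 1" by (auto simp: ee_def complex_eq_iff)
  then obtain k :: int where "2 * pi * x = real_of_int k * 2 * pi" by (auto simp: cos_one_2pi_int)
  then have "x = of_int k" by simp
  then show "x \<in> \<int>" by simp
next
  assume "x \<in> \<int>" then show "ee x = 1" by (auto elim!: Ints_cases simp: ee_int)
qed

lemma orth1:
  assumes N: "N > 0"
  shows "(\<Sum>t\<in>{0..<int N}. ee (of_int (k * t) / real N)) = (if k mod int N = 0 then of_nat N else 0)"
proof -
  define w where "w = ee (of_int k / real N)"
  have "(\<Sum>t\<in>{0..<int N}. ee (of_int (k * t) / real N)) = (\<Sum>t\<in>{..<N}. ee (of_int (k * int t) / real N))"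
  proof -
    have "{0..<int N} = int ` {..<N}" by (auto simp: image_iff intro!: bexI[of _ "nat _"])
    then show ?thesis by (simp add: sum.reindex)
  qed
  also have "\<dots> = (\<Sum>t\<in>{..<N}. w ^ t)"
  proof (intro sum.cong refl)
    fix t assume "t \<in> {..<N}"
    show "ee (of_int (k * int t) / real N) = w ^ t"
    proof -
      have "w ^ t = cis (real t * (2 * pi * (of_int k / real N)))"
        by (simp only: w_def ee_def Complex.DeMoivre)
      also have "\<dots> = ee (of_int (k * int t) / real N)"
        unfolding ee_def by (rule arg_cong[where f=cis]) (simp add: field_simps)
      finally show ?thesis by simp
    qed
  qed
  also have "\<dots> = (if k mod int N = 0 then of_nat N else 0)"
  proof (cases "k mod int N = 0")
    case True
    then obtain q where "k = int N * q" by auto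
    then have "w = 1" using N by (simp add: w_def ee_int)
    then show ?thesis using True by simp
  next
    case False
    have "w \<noteq> 1"
    proof
      assume "w = 1"
      then have "of_int k / real N \<in> \<int>" by (simp add: w_def ee_eq_1_iff)
      then obtain q where q: "of_int k / real N = of_int q" by (auto elim: Ints_cases)
      then have "of_int k = (of_int (int N * q) :: real)" using N by (simp add: field_simps)
      then have "k = int N * q" by linarith
      then show False using False by simp
    qed
    moreover have "w ^ N = 1" using N by (simp add: w_def ee_def Complex.DeMoivre ee_int)
    ultimately show ?thesis using False by (simp add: geometric_sum)
  qed
  finally show ?thesis .
qed

lemma circ_vertices_PiE: "circ_vertices n = PiE UNIV (\<lambda>_. {0..<int n})"
  by (auto simp: circ_vertices_def PiE_UNIV_domain)

lemma finite_circ_vertices: "finite (circ_vertices n)"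
  unfolding circ_vertices_PiE by (intro finite_PiE) auto

lemma card_circ_vertices: "card (circ_vertices n :: ('m::finite \<Rightarrow> int) set) = n ^ CARD('m)"
  unfolding circ_vertices_PiE by (simp add: card_PiE)

lemma orthm:
  fixes k :: "'m::finite \<Rightarrow> int"
  assumes N: "N > 0"
  shows "(\<Sum>y\<in>circ_vertices N. ee (of_int (idot k y) / real N)) =
         (if \<forall>j. k j mod int N = 0 then of_nat N ^ CARD('m) else (0::complex))"
proof -
  have "(\<Sum>y\<in>circ_vertices N. ee (of_int (idot k y) / real N)) =
        (\<Sum>y\<in>PiE UNIV (\<lambda>_. {0..<int N}). \<Prod>j\<in>UNIV. ee (of_int (k j * y j) / N))"
    unfolding circ_vertices_PiE idot_def
    by (intro sum.cong refl) (simp add: ee_sum[symmetric] sum_divide_distrib)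
  also have "\<dots> = (\<Prod>j\<in>(UNIV::'m set). \<Sum>t\<in>{0..<int N}. ee (of_int (k j * t) / real N))"
    by (rule prod_sum_PiE[symmetric]) auto
  also have "\<dots> = (\<Prod>j\<in>(UNIV::'m set). if k j mod int N = 0 then of_nat N else 0)"
    using N by (intro prod.cong refl) (rule orth1)
  also have "\<dots> = (if \<forall>j. k j mod int N = 0 then of_nat N ^ CARD('m) else 0)"
    by (auto simp: prod_constant prod_zero_iff)
  finally show ?thesis .
qed

lemma idot_lin: "idot (\<lambda>j. d j - s j + t j) y = idot d y - idot s y + idot t y"
  unfolding idot_def by (simp add: algebra_simps sum.distrib sum_subtractf)

lemma idot_diff: "idot (\<lambda>j. d j - s j) y = idot d y - idot s y"
  unfolding idot_def by (simp add: algebra_simps sum_subtractf)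

lemma ee3: "ee (of_int (idot d y) / real N) * ee (- of_int (idot s y) / real N) * ee (of_int (idot t y) / real N)
   = ee (of_int (idot (\<lambda>j. d j - s j + t j) y) / real N)"
  by (simp add: idot_lin ee_add[symmetric] add_divide_distrib diff_divide_distrib)

definition ah :: "nat \<Rightarrow> ('m::finite\<Rightarrow>int) set \<Rightarrow> (('m\<Rightarrow>int)\<Rightarrow>complex) \<Rightarrow> ('m\<Rightarrow>int) \<Rightarrow> complex" where
  "ah N S a y = (\<Sum>s\<in>S. a s * ee (- of_int (idot s y) / real N))"

lemma dvd_small:
  fixes x n :: int assumes "n dvd x" "\<bar>x\<bar> < n" shows "x = 0"
proof (rule ccontr)
  assume "x \<noteq> 0"
  then have "\<bar>n\<bar> \<le> \<bar>x\<bar>" using dvd_imp_le_int assms(1) by blast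
  then show False using assms(2) by simp
qed

lemma not_adj_mod:
  assumes "\<not> circ_adj D N s t" "d \<in> D"
  shows "\<not> (\<forall>j. (d j - s j + t j) mod int N = 0)"
proof
  assume h: "\<forall>j. (d j - s j + t j) mod int N = 0"
  have "(s j - t j) mod int N = d j mod int N" for j
  proof -
    have "int N dvd (d j - s j + t j)" using h by auto
    moreover have "(s j - t j) - d j = - (d j - s j + t j)" by simp
    ultimately have "int N dvd ((s j - t j) - d j)" by (simp only: dvd_minus_iff)
    then show ?thesis by (simp add: mod_eq_dvd_iff)
  qed
  then have "circ_adj D N s t" using assms(2) unfolding circ_adj_def by blast
  then show False using assms(1) by simp
qed

lemma quad_zero:
  fixes D S :: "('m::finite \<Rightarrow> int) set"
  assumes N: "N > 0" and fin: "finite D" and SG: "S \<subseteq> circ_vertices N"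
    and ind: "\<forall>s\<in>S. \<forall>t\<in>S. \<not> circ_adj D N s t"
  shows "(\<Sum>y\<in>circ_vertices N. (\<Sum>d\<in>D. b d * ee (of_int (idot d y) / real N)) * (ah N S a y * cnj (ah N S a y))) = 0"
proof -
  define G where "G = (circ_vertices N :: ('m \<Rightarrow> int) set)"
  have trm: "(\<Sum>d\<in>D. b d * ee (of_int (idot d y) / real N)) * (ah N S a y * cnj (ah N S a y))
     = (\<Sum>d\<in>D. \<Sum>s\<in>S. \<Sum>t\<in>S. b d * a s * cnj (a t) * ee (of_int (idot (\<lambda>j. d j - s j + t j) y) / real N))" for y
  proof -
    have "ah N S a y * cnj (ah N S a y) = (\<Sum>s\<in>S. \<Sum>t\<in>S. a s * cnj (a t) * (ee (- of_int (idot s y) / real N) * ee (of_int (idot t y) / real N)))"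
      unfolding ah_def by (simp add: sum_product cnj_ee mult_ac)
    note e1 = this
    have "(\<Sum>d\<in>D. b d * ee (of_int (idot d y) / real N)) * (ah N S a y * cnj (ah N S a y))
      = (\<Sum>d\<in>D. \<Sum>s\<in>S. \<Sum>t\<in>S. (b d * ee (of_int (idot d y) / real N)) * (a s * cnj (a t) * (ee (- of_int (idot s y) / real N) * ee (of_int (idot t y) / real N))))"
      unfolding e1 sum_distrib_right by (simp only: sum_distrib_left)
    also have "\<dots> = (\<Sum>d\<in>D. \<Sum>s\<in>S. \<Sum>t\<in>S. b d * a s * cnj (a t) * ee (of_int (idot (\<lambda>j. d j - s j + t j) y) / real N))"
      by (intro sum.cong refl) (simp add: ee3[symmetric] mult_ac)
    finally show ?thesis .
  qed
  have "(\<Sum>y\<in>G. (\<Sum>d\<in>D. b d * ee (of_int (idot d y) / real N)) * (ah N S a y * cnj (ah N S a y)))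
     = (\<Sum>y\<in>G. \<Sum>d\<in>D. \<Sum>s\<in>S. \<Sum>t\<in>S. b d * a s * cnj (a t) * ee (of_int (idot (\<lambda>j. d j - s j + t j) y) / real N))"
    by (simp add: trm)
  also have "\<dots> = (\<Sum>d\<in>D. \<Sum>s\<in>S. \<Sum>t\<in>S. \<Sum>y\<in>G. b d * a s * cnj (a t) * ee (of_int (idot (\<lambda>j. d j - s j + t j) y) / real N))"
    by (simp only: sum.swap[of _ G])
  also have "\<dots> = (\<Sum>d\<in>D. \<Sum>s\<in>S. \<Sum>t\<in>S. b d * a s * cnj (a t) * (\<Sum>y\<in>G. ee (of_int (idot (\<lambda>j. d j - s j + t j) y) / real N)))"
    by (simp add: sum_distrib_left)
  also have "\<dots> = 0"
  proof (intro sum.neutral ballI)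
    fix d s t assume d: "d \<in> D" and s: "s \<in> S" and t: "t \<in> S"
    have nz: "\<not> (\<forall>j. (d j - s j + t j) mod int N = 0)"
      using not_adj_mod[of D N s t d] ind s t d by blast
    have "(\<Sum>y\<in>G. ee (of_int (idot (\<lambda>j. d j - s j + t j) y) / real N)) = 0"
      unfolding G_def orthm[OF N] using nz by (simp only: if_False)
    then show "b d * a s * cnj (a t) * (\<Sum>y\<in>G. ee (of_int (idot (\<lambda>j. d j - s j + t j) y) / real N)) = 0"
      by simp
  qed
  finally show ?thesis unfolding G_def .
qed

lemma inversion:
  fixes S :: "('m::finite \<Rightarrow> int) set"
  assumes N: "N > 0" and SG: "S \<subseteq> circ_vertices N" and s0: "s0 \<in> S"
  shows "(\<Sum>y\<in>circ_vertices N. ah N S a y * ee (of_int (idot s0 y) / real N)) = of_nat N ^ CARD('m) * a s0"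
proof -
  define G where "G = (circ_vertices N :: ('m \<Rightarrow> int) set)"
  have fS: "finite S" using SG finite_circ_vertices finite_subset by blast
  have "(\<Sum>y\<in>G. ah N S a y * ee (of_int (idot s0 y) / real N))
      = (\<Sum>y\<in>G. \<Sum>s\<in>S. a s * ee (of_int (idot (\<lambda>j. s0 j - s j) y) / real N))"
    unfolding ah_def
    by (intro sum.cong refl) (simp add: sum_distrib_right idot_diff ee_add[symmetric] diff_divide_distrib mult.assoc)
  also have "\<dots> = (\<Sum>s\<in>S. a s * (\<Sum>y\<in>G. ee (of_int (idot (\<lambda>j. s0 j - s j) y) / real N)))"
    by (subst sum.swap) (simp add: sum_distrib_left)
  also have "\<dots> = (\<Sum>s\<in>S. if s = s0 then of_nat N ^ CARD('m) * a s0 else 0)"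
  proof (intro sum.cong refl)
    fix s assume s: "s \<in> S"
    have iff: "(\<forall>j. (s0 j - s j) mod int N = 0) \<longleftrightarrow> s = s0"
    proof
      assume h: "\<forall>j. (s0 j - s j) mod int N = 0"
      show "s = s0"
      proof
        fix j
        have "0 \<le> s j" "s j < int N" "0 \<le> s0 j" "s0 j < int N"
          using s s0 SG by (auto simp: circ_vertices_def)
        then have b: "\<bar>s0 j - s j\<bar> < int N" by linarith
        have "int N dvd (s0 j - s j)" using h by auto
        then have "s0 j - s j = 0" using dvd_small[of "int N" "s0 j - s j"] b by blast
        then show "s j = s0 j" by simp
      qed
    qed simp
    show "a s * (\<Sum>y\<in>G. ee (of_int (idot (\<lambda>j. s0 j - s j) y) / real N)) = (if s = s0 then of_nat N ^ CARD('m) * a s0 else 0)"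
      unfolding G_def orthm[OF N] iff by simp
  qed
  also have "\<dots> = of_nat N ^ CARD('m) * a s0" using s0 fS by simp
  finally show ?thesis unfolding G_def .
qed

lemma sum_fun_apply: "(sum f A) x = (\<Sum>a\<in>A. f a x)"
  by (induction A rule: infinite_finite_induct) (auto simp: plus_fun_def zero_fun_def)

lemma vs_fun: "vector_space (\<lambda>(c::complex) (f::'a\<Rightarrow>complex) x. c * f x)"
  by unfold_locales (auto simp: fun_eq_iff algebra_simps plus_fun_def)

lemma family:
  fixes D S :: "('m::finite \<Rightarrow> int) set" and lam :: "('m\<Rightarrow>int) \<Rightarrow> complex"
  assumes N: "N > 0" and fin: "finite D" and SG: "S \<subseteq> circ_vertices N"
    and ind: "\<forall>s\<in>S. \<forall>t\<in>S. \<not> circ_adj D N s t"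
    and lam: "\<And>y. lam y = (\<Sum>d\<in>D. b d * ee (of_int (idot d y) / real N))"
    and re: "\<And>y. y \<in> circ_vertices N \<Longrightarrow> Im (lam y) = 0"
    and van: "\<And>y. y \<in> circ_vertices N \<Longrightarrow> Re (lam y) \<ge> 0 \<Longrightarrow> ah N S a y = 0"
    and s0: "s0 \<in> S"
  shows "a s0 = 0"
proof -
  define G where "G = (circ_vertices N :: ('m \<Rightarrow> int) set)"
  have fG: "finite G" unfolding G_def by (rule finite_circ_vertices)
  have Q: "(\<Sum>y\<in>G. lam y * (ah N S a y * cnj (ah N S a y))) = 0"
    unfolding G_def lam using quad_zero[OF N fin SG ind] by simp
  have tm: "lam y * (ah N S a y * cnj (ah N S a y)) = of_real (Re (lam y) * (cmod (ah N S a y))^2)" if "y \<in> G" for y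
  proof -
    have "lam y = of_real (Re (lam y))" using re[of y] that by (simp add: G_def complex_eq_iff)
    then obtain r where r: "lam y = of_real r" by blast
    have h2: "ah N S a y * cnj (ah N S a y) = of_real ((cmod (ah N S a y))^2)"
      by (rule complex_norm_square[symmetric])
    show ?thesis unfolding h2 r by simp
  qed
  have "(\<Sum>y\<in>G. of_real (Re (lam y) * (cmod (ah N S a y))^2) :: complex) = 0"
    using Q sum.cong[OF refl tm, of G] by simp
  then have "of_real (\<Sum>y\<in>G. Re (lam y) * (cmod (ah N S a y))^2) = (0::complex)"
    by (simp only: of_real_sum)
  then have Q2: "(\<Sum>y\<in>G. Re (lam y) * (cmod (ah N S a y))^2) = 0"
    by (simp only: of_real_eq_0_iff)
  have nn: "\<forall>y\<in>G. 0 \<le> - (Re (lam y) * (cmod (ah N S a y))^2)"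
  proof
    fix y assume y: "y \<in> G"
    show "0 \<le> - (Re (lam y) * (cmod (ah N S a y))^2)"
    proof (cases "Re (lam y) \<ge> 0")
      case True then show ?thesis using van[of y] y by (simp add: G_def)
    next
      case False then show ?thesis by (simp add: mult_nonpos_nonneg)
    qed
  qed
  have "(\<Sum>y\<in>G. - (Re (lam y) * (cmod (ah N S a y))^2)) = 0"
    using Q2 by (simp add: sum_negf)
  then have z: "\<forall>y\<in>G. - (Re (lam y) * (cmod (ah N S a y))^2) = 0"
    using sum_nonneg_eq_0_iff[OF fG, of "\<lambda>y. - (Re (lam y) * (cmod (ah N S a y))^2)"] nn by blast
  have allz: "ah N S a y = 0" if y: "y \<in> G" for y
  proof (cases "Re (lam y) \<ge> 0")
    case True then show ?thesis using van[of y] y by (simp add: G_def)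
  next
    case False then show ?thesis using z y by auto
  qed
  have "of_nat N ^ CARD('m) * a s0 = (\<Sum>y\<in>G. ah N S a y * ee (of_int (idot s0 y) / real N))"
    unfolding G_def using inversion[OF N SG s0] by simp
  also have "\<dots> = 0" using allz by simp
  finally show ?thesis using N by simp
qed

lemma core_bound:
  fixes D S :: "('m::finite \<Rightarrow> int) set" and lam :: "('m\<Rightarrow>int) \<Rightarrow> complex"
  assumes N: "N > 0" and fin: "finite D" and SG: "S \<subseteq> circ_vertices N"
    and ind: "\<forall>s\<in>S. \<forall>t\<in>S. \<not> circ_adj D N s t"
    and lam: "\<And>y. lam y = (\<Sum>d\<in>D. b d * ee (of_int (idot d y) / real N))"
    and re: "\<And>y. y \<in> circ_vertices N \<Longrightarrow> Im (lam y) = 0"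
  shows "card S \<le> card {y\<in>circ_vertices N. Re (lam y) \<ge> 0}"
proof -
  interpret V: vector_space "\<lambda>(c::complex) (f::('m\<Rightarrow>int)\<Rightarrow>complex) x. c * f x" by (rule vs_fun)
  define P where "P = {y\<in>circ_vertices N. Re (lam y) \<ge> 0}"
  define u where "u s = (\<lambda>y. if y \<in> P then ee (- of_int (idot s y) / real N) else 0)" for s
  define \<delta> where "\<delta> y = (\<lambda>x::'m\<Rightarrow>int. if y = x then (1::complex) else 0)" for y
  have fS: "finite S" using SG finite_circ_vertices finite_subset by blast
  have fP: "finite P" unfolding P_def using finite_circ_vertices[of N] by (rule finite_subset[rotated]) auto
  have fam: "\<forall>s\<in>S. a s = 0" if h: "\<forall>y\<in>P. ah N S a y = 0" for a
  proof
    fix s0 assume s0: "s0 \<in> S"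
    show "a s0 = 0"
      by (rule family[OF N fin SG ind lam re _ s0]) (use h in \<open>auto simp: P_def\<close>)
  qed
  have inj: "inj_on u S"
  proof (rule inj_onI)
    fix s t assume s: "s \<in> S" and t: "t \<in> S" and ust: "u s = u t"
    show "s = t"
    proof (rule ccontr)
      assume st: "s \<noteq> t"
      define a where "a x = (if x = s then 1 else if x = t then -1 else (0::complex))" for x
      have "\<forall>y\<in>P. ah N S a y = 0"
      proof
        fix y assume y: "y \<in> P"
        have "ah N S a y = (\<Sum>x\<in>S. (if x = s then ee (- of_int (idot x y) / real N) else 0)
                   - (if x = t then ee (- of_int (idot x y) / real N) else 0))"
          unfolding ah_def a_def using st by (intro sum.cong refl) auto
        also have "\<dots> = ee (- of_int (idot s y) / real N) - ee (- of_int (idot t y) / real N)"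
          using s t fS by (simp add: sum_subtractf)
        also have "\<dots> = u s y - u t y" using y by (simp add: u_def)
        also have "\<dots> = 0" using ust by simp
        finally show "ah N S a y = 0" .
      qed
      then have "a s = 0" using fam s by blast
      then show False by (simp add: a_def)
    qed
  qed
  have indep: "V.independent (u ` S)"
    unfolding V.independent_explicit_finite_subsets
  proof (intro allI impI ballI)
    fix T w v assume T: "T \<subseteq> u ` S" and fT: "finite T"
      and sumz: "(\<Sum>v\<in>T. (\<lambda>x. w v * v x)) = 0" and v: "v \<in> T"
    define S' where "S' = {s\<in>S. u s \<in> T}"
    have TS': "T = u ` S'" using T by (auto simp: S'_def)
    have inj': "inj_on u S'" using inj by (rule inj_on_subset) (auto simp: S'_def)
    define a where "a s = (if s \<in> S' then w (u s) else 0)" for s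
    have "\<forall>y\<in>P. ah N S a y = 0"
    proof
      fix y assume y: "y \<in> P"
      have "ah N S a y = (\<Sum>s\<in>S. if s \<in> S' then w (u s) * ee (- of_int (idot s y) / real N) else 0)"
        unfolding ah_def a_def by (intro sum.cong refl) auto
      also have "\<dots> = (\<Sum>s\<in>S \<inter> S'. w (u s) * ee (- of_int (idot s y) / real N))"
        using fS by (rule sum.inter_restrict[symmetric])
      also have "S \<inter> S' = S'" by (auto simp: S'_def)
      also have "(\<Sum>s\<in>S'. w (u s) * ee (- of_int (idot s y) / real N)) = (\<Sum>s\<in>S'. w (u s) * u s y)"
        using y by (simp add: u_def)
      also have "\<dots> = (\<Sum>v\<in>T. w v * v y)"
        unfolding TS' using inj' by (simp add: sum.reindex)
      also have "\<dots> = (\<Sum>v\<in>T. (\<lambda>x. w v * v x)) y"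
        by (simp add: sum_fun_apply)
      also have "\<dots> = 0" using sumz by simp
      finally show "ah N S a y = 0" .
    qed
    then have az: "\<forall>s\<in>S. a s = 0" by (rule fam)
    from v TS' obtain s where s: "s \<in> S'" "v = u s" by blast
    then have "a s = w v" by (simp add: a_def)
    moreover have "s \<in> S" using s by (simp add: S'_def)
    ultimately show "w v = 0" using az by simp
  qed
  have span: "u ` S \<subseteq> V.span (\<delta> ` P)"
  proof
    fix v assume "v \<in> u ` S"
    then obtain s where s: "s \<in> S" "v = u s" by blast
    have "u s = (\<Sum>y\<in>P. (\<lambda>x. ee (- of_int (idot s y) / real N) * \<delta> y x))"
    proof (rule ext)
      fix x
      have md: "\<And>c::complex. \<And>Q. c * (if Q then 1 else 0) = (if Q then c else 0)" by simp
      show "u s x = (\<Sum>y\<in>P. (\<lambda>x. ee (- of_int (idot s y) / real N) * \<delta> y x)) x"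
        unfolding sum_fun_apply \<delta>_def md using fP by (simp add: u_def)
    qed
    also have "\<dots> \<in> V.span (\<delta> ` P)"
      by (intro V.span_sum V.span_scale V.span_base) auto
    finally show "v \<in> V.span (\<delta> ` P)" using s by simp
  qed
  have "card (u ` S) \<le> card (\<delta> ` P)"
    using V.independent_span_bound[OF _ indep span] fP by auto
  also have "\<dots> \<le> card P" using fP by (rule card_image_le)
  finally show ?thesis using card_image[OF inj] by (simp add: P_def)
qed

definition U :: "real measure" where "U = restrict_space lborel {0..<1}"

lemma space_U: "space U = {0..<1}"
  by (simp add: U_def)

lemma sets_U: "A \<in> sets U \<longleftrightarrow> A \<in> sets lborel \<and> A \<subseteq> {0..<1}"
  unfolding U_def by (subst sets_restrict_space_iff) auto

lemma prob_space_U: "prob_space U"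
  unfolding U_def by (rule prob_spaceI) (simp add: emeasure_restrict_space)

lemma emeasure_lborel_shift:
  fixes c :: real
  assumes "X \<in> sets lborel"
  shows "emeasure lborel ((+) c -` X) = emeasure lborel X"
proof -
  have "emeasure (distr lborel borel ((+) c)) X = emeasure lborel ((+) c -` X \<inter> space lborel)"
    using assms by (intro emeasure_distr) auto
  thus ?thesis by (simp add: lborel_distr_plus)
qed

lemma frac_meas[measurable]: "frac \<in> borel_measurable (borel :: real measure)"
  unfolding frac_def by measurable

lemma rot_meas: "(\<lambda>t. frac (t + b)) \<in> measurable U U"
  unfolding U_def
  by (intro measurable_restrict_space1 measurable_restrict_space2) (auto simp: frac_lt_1)

lemma pre_shift: "X \<in> sets borel \<Longrightarrow> (+) (c::real) -` X \<in> sets borel"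
proof -
  assume X: "X \<in> sets borel"
  have "(\<lambda>x. c + x) \<in> borel_measurable (borel :: real measure)" by measurable
  from measurable_sets[OF this X] show ?thesis by simp
qed

lemma rot_emeasure:
  assumes A: "A \<in> sets U"
  shows "emeasure U ((\<lambda>t. frac (t + b)) -` A \<inter> space U) = emeasure U A"
proof -
  define b' where "b' = frac b"
  have b': "0 \<le> b'" "b' < 1" by (auto simp: b'_def frac_lt_1)
  have Al: "A \<in> sets lborel" "A \<subseteq> {0..<1}" using A sets_U by auto
  have fr: "frac (t + b) = (if t + b' < 1 then t + b' else t + b' - 1)" if "t \<in> {0..<1}" for t
  proof -
    have i: "t + b - (t + b') \<in> \<int>" "t + b - (t + b' - 1) \<in> \<int>"
      unfolding b'_def frac_def by auto
    show ?thesis using that b' i by (auto simp: frac_unique_iff)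
  qed
  define P1 where "P1 = (+) b' -` (A \<inter> {b'..<1})"
  define P2 where "P2 = (+) (b' - 1) -` (A \<inter> {0..<b'})"
  have eq: "(\<lambda>t. frac (t + b)) -` A \<inter> space U = P1 \<union> P2"
    using Al(2) b' by (auto simp: space_U fr P1_def P2_def add_ac add_diff_eq split: if_splits)
  have m: "A \<inter> {b'..<1} \<in> sets lborel" "A \<inter> {0..<b'} \<in> sets lborel" using Al by auto
  have mP: "P1 \<in> sets lborel" "P2 \<in> sets lborel" unfolding P1_def P2_def
    using pre_shift[of "A \<inter> {b'..<1}" b'] pre_shift[of "A \<inter> {0..<b'}" "b' - 1"] m by auto
  have "emeasure U (P1 \<union> P2) = emeasure lborel (P1 \<union> P2)"
    unfolding U_def using b' by (intro emeasure_restrict_space) (auto simp: P1_def P2_def)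
  also have "\<dots> = emeasure lborel P1 + emeasure lborel P2"
    using mP b' by (intro plus_emeasure[symmetric]) (auto simp: P1_def P2_def)
  also have "\<dots> = emeasure lborel (A \<inter> {b'..<1}) + emeasure lborel (A \<inter> {0..<b'})"
    unfolding P1_def P2_def using m emeasure_lborel_shift[of "A \<inter> {b'..<1}" b'] emeasure_lborel_shift[of "A \<inter> {0..<b'}" "b' - 1"] by simp
  also have "\<dots> = emeasure lborel ((A \<inter> {b'..<1}) \<union> (A \<inter> {0..<b'}))"
    using m by (intro plus_emeasure) auto
  also have "(A \<inter> {b'..<1}) \<union> (A \<inter> {0..<b'}) = A" using Al b' by auto
  also have "emeasure lborel A = emeasure U A"
    unfolding U_def using Al by (intro emeasure_restrict_space[symmetric]) auto
  finally show ?thesis using eq by simp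
qed

definition PU :: "('m::finite \<Rightarrow> real) measure" where "PU = PiM UNIV (\<lambda>_. U)"

lemma product_prob_space_U: "product_prob_space (\<lambda>_::'m. U)"
  by (intro product_prob_spaceI prob_space_U)

lemma prob_space_PU: "prob_space (PU :: ('m::finite \<Rightarrow> real) measure)"
  unfolding PU_def by (intro prob_space_PiM prob_space_U)

lemma rotm_meas: "(\<lambda>\<theta> j. frac (\<theta> j + a j)) \<in> measurable (PU :: ('m::finite \<Rightarrow> real) measure) PU"
proof -
  have "(\<lambda>\<theta>. frac (\<theta> j + a j)) \<in> measurable (PiM UNIV (\<lambda>_::'m. U)) U" for j
    using measurable_compose[OF measurable_component_singleton[of j UNIV "\<lambda>_. U"] rot_meas[of "a j"]] by simp
  then show ?thesis unfolding PU_def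
    by (intro measurable_PiM_single') (auto simp: space_PiM space_U frac_lt_1)
qed

lemma PU_rot: "distr PU PU (\<lambda>\<theta> j. frac (\<theta> j + a j)) = (PU :: ('m::finite \<Rightarrow> real) measure)"
proof -
  interpret P: product_prob_space "\<lambda>_::'m. U" by (rule product_prob_space_U)
  show ?thesis unfolding PU_def
  proof (rule P.PiM_eqI)
    show "finite (UNIV::'m set)" by simp
    show "sets (distr (Pi\<^sub>M UNIV (\<lambda>_. U)) (Pi\<^sub>M UNIV (\<lambda>_. U)) (\<lambda>\<theta> j. frac (\<theta> j + a j))) = sets (Pi\<^sub>M UNIV (\<lambda>_. U))"
      by simp
    fix A :: "'m \<Rightarrow> real set" assume A: "\<And>i. i \<in> UNIV \<Longrightarrow> A i \<in> sets U"
    have "emeasure (distr (Pi\<^sub>M UNIV (\<lambda>_. U)) (Pi\<^sub>M UNIV (\<lambda>_. U)) (\<lambda>\<theta> j. frac (\<theta> j + a j))) (Pi\<^sub>E UNIV A)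
       = emeasure (Pi\<^sub>M UNIV (\<lambda>_. U)) ((\<lambda>\<theta> j. frac (\<theta> j + a j)) -` Pi\<^sub>E UNIV A \<inter> space (Pi\<^sub>M UNIV (\<lambda>_. U)))"
      using rotm_meas[of a] A unfolding PU_def by (intro emeasure_distr) (auto intro: sets_PiM_I_finite)
    also have "(\<lambda>\<theta> j. frac (\<theta> j + a j)) -` Pi\<^sub>E UNIV A \<inter> space (Pi\<^sub>M UNIV (\<lambda>_. U))
        = Pi\<^sub>E UNIV (\<lambda>i. (\<lambda>t. frac (t + a i)) -` A i \<inter> space U)"
      by (auto simp: space_PiM PiE_def Pi_def)
    also have "emeasure (Pi\<^sub>M UNIV (\<lambda>_. U)) \<dots> = (\<Prod>i\<in>UNIV. emeasure U ((\<lambda>t. frac (t + a i)) -` A i \<inter> space U))"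
      using A rot_meas by (intro P.emeasure_PiM) (auto intro: measurable_sets)
    also have "\<dots> = (\<Prod>i\<in>UNIV. emeasure U (A i))"
      using A by (intro prod.cong refl rot_emeasure) auto
    finally show "emeasure (distr (Pi\<^sub>M UNIV (\<lambda>_. U)) (Pi\<^sub>M UNIV (\<lambda>_. U)) (\<lambda>\<theta> j. frac (\<theta> j + a j))) (Pi\<^sub>E UNIV A) = (\<Prod>i\<in>UNIV. emeasure U (A i))" .
  qed
qed


lemma cis_meas[measurable]: "cis \<in> borel_measurable borel"
  by (intro borel_measurable_continuous_onI continuous_intros)

lemma comp_PU_U: "(\<lambda>\<theta>. \<theta> j) \<in> measurable (PU :: ('m::finite \<Rightarrow> real) measure) U"
  unfolding PU_def by (rule measurable_component_singleton) simp

lemma comp_PU[measurable]: "(\<lambda>\<theta>. \<theta> j) \<in> borel_measurable (PU :: ('m::finite \<Rightarrow> real) measure)"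
proof -
  have "(\<lambda>x::real. x) \<in> borel_measurable U"
    unfolding U_def by (intro measurable_restrict_space1) simp
  from measurable_compose[OF comp_PU_U[where 'm='m and j=j] this] show ?thesis .
qed

lemma space_PU: "space (PU :: ('m::finite \<Rightarrow> real) measure) = {\<theta>. \<forall>j. \<theta> j \<in> {0..<1}}"
  unfolding PU_def by (auto simp: space_PiM space_U PiE_UNIV_domain)

lemma PU_shift_measure:
  fixes Q :: "('m::finite \<Rightarrow> real) \<Rightarrow> bool"
  assumes meas: "{\<theta>\<in>space PU. Q \<theta>} \<in> sets PU"
    and per: "\<And>\<theta> k. Q (\<lambda>j. \<theta> j + of_int (k j)) = Q \<theta>"
  shows "measure PU {\<theta>\<in>space PU. Q (\<lambda>j. \<theta> j + a j)} = measure PU {\<theta>\<in>space PU. Q \<theta>}"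
proof -
  have eqQ: "Q (\<lambda>j. \<theta> j + a j) = Q (\<lambda>j. frac (\<theta> j + a j))" for \<theta>
  proof -
    have "(\<lambda>j. \<theta> j + a j) = (\<lambda>j. frac (\<theta> j + a j) + of_int (\<lfloor>\<theta> j + a j\<rfloor>))"
      by (simp add: frac_def)
    then show ?thesis using per[of "\<lambda>j. frac (\<theta> j + a j)" "\<lambda>j. \<lfloor>\<theta> j + a j\<rfloor>"] by simp
  qed
  have "measure PU {\<theta>\<in>space PU. Q \<theta>} = measure (distr PU PU (\<lambda>\<theta> j. frac (\<theta> j + a j))) {\<theta>\<in>space PU. Q \<theta>}"
    by (simp add: PU_rot)
  also have "\<dots> = measure PU ((\<lambda>\<theta> j. frac (\<theta> j + a j)) -` {\<theta>\<in>space PU. Q \<theta>} \<inter> space PU)"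
    by (rule measure_distr[OF rotm_meas meas])
  also have "(\<lambda>\<theta> j. frac (\<theta> j + a j)) -` {\<theta>\<in>space PU. Q \<theta>} \<inter> space PU = {\<theta>\<in>space PU. Q (\<lambda>j. \<theta> j + a j)}"
    by (auto simp: space_PU frac_lt_1 eqQ)
  finally show ?thesis by simp
qed

lemma sum_measure_integral:
  fixes A :: "'y \<Rightarrow> ('m::finite \<Rightarrow> real) set"
  assumes "finite Y" "\<And>y. y \<in> Y \<Longrightarrow> A y \<in> sets PU"
  shows "(\<Sum>y\<in>Y. measure PU (A y)) = integral\<^sup>L PU (\<lambda>\<theta>. \<Sum>y\<in>Y. indicator (A y) \<theta>)"
proof -
  interpret prob_space "PU :: ('m \<Rightarrow> real) measure" by (rule prob_space_PU)
  have "integral\<^sup>L PU (\<lambda>\<theta>. \<Sum>y\<in>Y. indicator (A y) \<theta>) = (\<Sum>y\<in>Y. integral\<^sup>L PU (indicator (A y) :: _ \<Rightarrow> real))"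
    by (rule Bochner_Integration.integral_sum) (use assms in \<open>auto intro!: integrable_indicator simp: emeasure_eq_measure\<close>)
  also have "\<dots> = (\<Sum>y\<in>Y. measure PU (A y))"
    using assms by (intro sum.cong refl) simp
  finally show ?thesis by simp
qed

definition dotr :: "('m::finite \<Rightarrow> int) \<Rightarrow> ('m \<Rightarrow> real) \<Rightarrow> real" where
  "dotr d \<theta> = (\<Sum>j\<in>UNIV. of_int (d j) * \<theta> j)"

definition Fc :: "('m::finite \<Rightarrow> int) set \<Rightarrow> (('m \<Rightarrow> int) \<Rightarrow> complex) \<Rightarrow> ('m \<Rightarrow> real) \<Rightarrow> complex" where
  "Fc D c \<theta> = (\<Sum>d\<in>D. c d * ee (dotr d \<theta>))"

lemma Fc_meas[measurable]: "(\<lambda>\<theta>. Fc D c \<theta>) \<in> borel_measurable (PU :: ('m::finite \<Rightarrow> real) measure)"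
  unfolding Fc_def ee_def dotr_def by measurable

lemma laurent_cis: "laurent D c (\<lambda>j. cis (2 * pi * \<theta> j)) = Fc D c \<theta>"
  unfolding laurent_def Fc_def
proof (intro sum.cong refl)
  fix d
  show "c d * (\<Prod>j\<in>UNIV. cis (2 * pi * \<theta> j) powi d j) = c d * ee (dotr d \<theta>)"
    by (simp add: cis_power_int ee_def dotr_def sum_distrib_left cis_sum mult_ac)
qed

lemma dotr_shift: "dotr d (\<lambda>j. \<theta> j + a j) = dotr d \<theta> + dotr d a"
  unfolding dotr_def by (simp add: algebra_simps sum.distrib)

lemma dotr_int: "dotr d (\<lambda>j. of_int (k j)) = of_int (idot d k)"
  unfolding dotr_def idot_def by simp

lemma Fc_periodic: "Fc D c (\<lambda>j. \<theta> j + of_int (k j)) = Fc D c \<theta>"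
  unfolding Fc_def by (simp add: dotr_shift dotr_int ee_add_int)

lemma Fc_grid: "Fc D c (\<lambda>j. \<theta> j + of_int (y j) / real N) = (\<Sum>d\<in>D. (c d * ee (dotr d \<theta>)) * ee (of_int (idot d y) / real N))"
proof -
  have "dotr d (\<lambda>j. of_int (y j) / real N) = of_int (idot d y) / real N" for d
    unfolding dotr_def idot_def by (simp add: sum_divide_distrib)
  then show ?thesis unfolding Fc_def by (simp add: dotr_shift ee_add mult_ac)
qed

lemma Fc_real:
  assumes fin: "finite D" and sym: "\<forall>d\<in>D. (\<lambda>j. - d j) \<in> D" and cc: "\<forall>d\<in>D. c (\<lambda>j. - d j) = cnj (c d)"
  shows "Im (Fc D c \<theta>) = 0"
proof -
  define ng where "ng d = (\<lambda>j. - d j)" for d :: "'a \<Rightarrow> int"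
  have inj: "inj_on ng D" by (rule inj_onI) (auto simp: ng_def fun_eq_iff)
  have img: "ng ` D = D"
  proof
    show "ng ` D \<subseteq> D" using sym by (auto simp: ng_def)
    show "D \<subseteq> ng ` D"
    proof
      fix d assume "d \<in> D"
      then have "ng d \<in> D" "ng (ng d) = d" using sym by (auto simp: ng_def)
      then show "d \<in> ng ` D" by (metis image_eqI)
    qed
  qed
  have dn: "dotr (\<lambda>j. - d j) \<theta> = - dotr d \<theta>" for d :: "'a \<Rightarrow> int"
    unfolding dotr_def by (simp add: sum_negf)
  have "cnj (Fc D c \<theta>) = (\<Sum>d\<in>D. c (ng d) * ee (dotr (ng d) \<theta>))"
    unfolding Fc_def using cc by (auto simp: cnj_ee dn ng_def intro!: sum.cong)
  also have "\<dots> = (\<Sum>d\<in>ng ` D. c d * ee (dotr d \<theta>))"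
    using inj by (simp add: sum.reindex)
  also have "\<dots> = Fc D c \<theta>" unfolding img Fc_def ..
  finally show ?thesis by (metis complex_cnj_cancel_iff complex_eq_iff cnj.simps(2) neg_equal_zero)
qed

lemma card_as_sum: "finite G \<Longrightarrow> real (card {y\<in>G. P y}) = (\<Sum>y\<in>G. if P y then 1 else 0)"
  by (simp add: sum.inter_filter[symmetric])

lemma alpha_N_bound_ge:
  fixes D S :: "('m::finite \<Rightarrow> int) set"
  assumes fin: "finite D" and sym: "\<forall>d\<in>D. (\<lambda>j. - d j) \<in> D" and cc: "\<forall>d\<in>D. c (\<lambda>j. - d j) = cnj (c d)"
    and N: "N > 0" and SG: "S \<subseteq> circ_vertices N" and ind: "\<forall>s\<in>S. \<forall>t\<in>S. \<not> circ_adj D N s t"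
  shows "real (card S) \<le> real N ^ CARD('m) * measure PU {\<theta>\<in>space PU. Re (Fc D c \<theta>) \<ge> 0}"
proof -
  interpret prob_space "PU :: ('m \<Rightarrow> real) measure" by (rule prob_space_PU)
  define G where "G = (circ_vertices N :: ('m \<Rightarrow> int) set)"
  have fG: "finite G" unfolding G_def by (rule finite_circ_vertices)
  define A where "A y = {\<theta>\<in>space PU. Re (Fc D c (\<lambda>j. \<theta> j + of_int (y j) / real N)) \<ge> 0}" for y :: "'m \<Rightarrow> int"
  have Am: "A y \<in> sets PU" for y unfolding A_def Fc_def ee_def dotr_def by measurable
  have pw: "real (card S) \<le> (\<Sum>y\<in>G. indicator (A y) \<theta>)" if th: "\<theta> \<in> space PU" for \<theta>
  proof -
    have "card S \<le> card {y\<in>circ_vertices N. Re (Fc D c (\<lambda>j. \<theta> j + of_int (y j) / real N)) \<ge> 0}"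
    proof (rule core_bound[OF N fin SG ind])
      show "Fc D c (\<lambda>j. \<theta> j + of_int (y j) / real N) = (\<Sum>d\<in>D. (c d * ee (dotr d \<theta>)) * ee (of_int (idot d y) / real N))" for y
        by (rule Fc_grid)
      show "Im (Fc D c (\<lambda>j. \<theta> j + of_int (y j) / real N)) = 0" for y
        by (rule Fc_real[OF fin sym cc])
    qed
    then have "real (card S) \<le> real (card {y\<in>G. Re (Fc D c (\<lambda>j. \<theta> j + of_int (y j) / real N)) \<ge> 0})"
      unfolding G_def by simp
    also have "\<dots> = (\<Sum>y\<in>G. indicator (A y) \<theta>)"
      unfolding card_as_sum[OF fG] using th by (intro sum.cong refl) (simp add: A_def indicator_def)
    finally show ?thesis .
  qed
  have "real (card S) \<le> integral\<^sup>L PU (\<lambda>\<theta>. \<Sum>y\<in>G. indicator (A y) \<theta>)"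
    using pw Am by (intro integral_ge_const) (auto intro!: integrable_indicator simp: emeasure_eq_measure)
  also have "\<dots> = (\<Sum>y\<in>G. measure PU (A y))"
    by (rule sum_measure_integral[symmetric]) (use fG Am in auto)
  also have "\<dots> = (\<Sum>y\<in>G. measure PU {\<theta>\<in>space PU. Re (Fc D c \<theta>) \<ge> 0})"
  proof (intro sum.cong refl)
    fix y
    show "measure PU (A y) = measure PU {\<theta>\<in>space PU. Re (Fc D c \<theta>) \<ge> 0}"
      unfolding A_def
      by (rule PU_shift_measure[where Q = "\<lambda>\<theta>. Re (Fc D c \<theta>) \<ge> 0" and a = "\<lambda>j. of_int (y j) / real N"])
         (measurable, simp add: Fc_periodic)
  qed
  also have "\<dots> = real N ^ CARD('m) * measure PU {\<theta>\<in>space PU. Re (Fc D c \<theta>) \<ge> 0}"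
    by (simp add: G_def card_circ_vertices)
  finally show ?thesis .
qed

lemma alpha_N_bound:
  fixes D S :: "('m::finite \<Rightarrow> int) set"
  assumes fin: "finite D" and sym: "\<forall>d\<in>D. (\<lambda>j. - d j) \<in> D" and cc: "\<forall>d\<in>D. c (\<lambda>j. - d j) = cnj (c d)"
    and N: "N > 0" and SG: "S \<subseteq> circ_vertices N" and ind: "\<forall>s\<in>S. \<forall>t\<in>S. \<not> circ_adj D N s t"
    and Z: "measure PU {\<theta>\<in>space PU. Fc D c \<theta> = 0} = 0"
  shows "real (card S) \<le> real N ^ CARD('m) * measure PU {\<theta>\<in>space PU. Re (Fc D c \<theta>) > 0}"
proof -
  interpret prob_space "PU :: ('m \<Rightarrow> real) measure" by (rule prob_space_PU)
  have sub: "{\<theta>\<in>space PU. Re (Fc D c \<theta>) \<ge> 0} \<subseteq> {\<theta>\<in>space PU. Re (Fc D c \<theta>) > 0} \<union> {\<theta>\<in>space PU. Fc D c \<theta> = 0}"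
    using Fc_real[OF fin sym cc] by (auto simp: complex_eq_iff)
  have "measure PU {\<theta>\<in>space PU. Re (Fc D c \<theta>) \<ge> 0} \<le> measure PU ({\<theta>\<in>space PU. Re (Fc D c \<theta>) > 0} \<union> {\<theta>\<in>space PU. Fc D c \<theta> = 0})"
    by (intro finite_measure_mono sub) measurable
  also have "\<dots> \<le> measure PU {\<theta>\<in>space PU. Re (Fc D c \<theta>) > 0} + measure PU {\<theta>\<in>space PU. Fc D c \<theta> = 0}"
    by (intro measure_subadditive) measurable
  finally have "measure PU {\<theta>\<in>space PU. Re (Fc D c \<theta>) \<ge> 0} \<le> measure PU {\<theta>\<in>space PU. Re (Fc D c \<theta>) > 0}"
    using Z by simp
  then have "real N ^ CARD('m) * measure PU {\<theta>\<in>space PU. Re (Fc D c \<theta>) \<ge> 0} \<le> real N ^ CARD('m) * measure PU {\<theta>\<in>space PU. Re (Fc D c \<theta>) > 0}"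
    by (rule mult_left_mono) simp
  then show ?thesis
    using alpha_N_bound_ge[OF fin sym cc N SG ind] by linarith
qed

lemma torus_meas: "torus \<in> sets (PiM UNIV (\<lambda>_::'m::finite. borel))"
proof -
  have "torus = {z \<in> space (PiM UNIV (\<lambda>_::'m::finite. borel)). \<forall>j\<in>UNIV. cmod (z j) = 1}"
    by (auto simp: torus_def space_PiM)
  also have "\<dots> \<in> sets (PiM UNIV (\<lambda>_::'m::finite. borel))" by measurable
  finally show ?thesis .
qed

lemma cisvec_meas: "(\<lambda>\<theta> j. cis (2 * pi * \<theta> j)) \<in> measurable (PU :: ('m::finite \<Rightarrow> real) measure) (PiM UNIV (\<lambda>_. borel))"
proof -
  have "(\<lambda>\<theta>. cis (2 * pi * \<theta> j)) \<in> borel_measurable (PU :: ('m::finite \<Rightarrow> real) measure)" for j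
    by measurable
  then show ?thesis by (intro measurable_PiM_single') (auto simp: space_PiM)
qed

lemma haar_measure:
  fixes P :: "complex \<Rightarrow> bool" and D :: "('m::finite \<Rightarrow> int) set"
  assumes Pm: "{x \<in> space borel. P x} \<in> sets borel"
  shows "measure haar_torus {z \<in> torus. P (laurent D c z)} = measure PU {\<theta>\<in>space PU. P (Fc D c \<theta>)}"
proof -
  have hd: "haar_torus = distr PU (PiM UNIV (\<lambda>_. borel)) (\<lambda>\<theta> j. cis (2 * pi * \<theta> j))"
    unfolding haar_torus_def PU_def U_def ..
  have lm: "(\<lambda>z. laurent D c z) \<in> borel_measurable (PiM UNIV (\<lambda>_::'m. borel))"
    unfolding laurent_def power_int_def by measurable
  have "{z \<in> torus. P (laurent D c z)} = torus \<inter> ((\<lambda>z. laurent D c z) -` {x \<in> space borel. P x} \<inter> space (PiM UNIV (\<lambda>_::'m. borel)))"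
    by (auto simp: space_PiM)
  also have "\<dots> \<in> sets (PiM UNIV (\<lambda>_::'m. borel))"
    by (intro sets.Int torus_meas measurable_sets[OF lm Pm])
  finally have sm: "{z \<in> torus. P (laurent D c z)} \<in> sets (PiM UNIV (\<lambda>_::'m. borel))" .
  have "measure haar_torus {z \<in> torus. P (laurent D c z)} =
        measure PU ((\<lambda>\<theta> j. cis (2 * pi * \<theta> j)) -` {z \<in> torus. P (laurent D c z)} \<inter> space PU)"
    unfolding hd by (rule measure_distr[OF cisvec_meas sm])
  also have "(\<lambda>\<theta> j. cis (2 * pi * \<theta> j)) -` {z \<in> torus. P (laurent D c z)} \<inter> space PU = {\<theta>\<in>space PU. P (Fc D c \<theta>)}"
    by (auto simp: torus_def laurent_cis)
  finally show ?thesis .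
qed

lemma rho_plus_eq: fixes D :: "('m::finite \<Rightarrow> int) set" shows "rho_plus (laurent D c) = measure PU {\<theta>\<in>space PU. Re (Fc D c \<theta>) > 0}"
  unfolding rho_plus_def by (rule haar_measure[where P = "\<lambda>x. Re x > 0"]) measurable

lemma rho_minus_eq: fixes D :: "('m::finite \<Rightarrow> int) set" shows "rho_minus (laurent D c) = measure PU {\<theta>\<in>space PU. Re (Fc D c \<theta>) < 0}"
  unfolding rho_minus_def by (rule haar_measure[where P = "\<lambda>x. Re x < 0"]) measurable

lemma exists_sep:
  fixes D :: "('m::finite \<Rightarrow> int) set"
  assumes fin: "finite D"
  shows "\<exists>v. inj_on (\<lambda>d. idot d v) D"
proof -
  obtain idx :: "'m \<Rightarrow> nat" and n where idx: "idx ` UNIV = {i. i < n}" "inj idx"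
    using finite_imp_inj_to_nat_seg[of "UNIV::'m set"] by auto
  define q where "q d d' = (\<Sum>j\<in>UNIV. monom (d j - d' j) (idx j) :: int poly)" for d d' :: "'m \<Rightarrow> int"
  have qnz: "q d d' \<noteq> 0" if ne: "d \<noteq> d'" for d d'
  proof -
    obtain j0 where j0: "d j0 \<noteq> d' j0" using ne by (auto simp: fun_eq_iff)
    have "coeff (q d d') (idx j0) = (\<Sum>j\<in>UNIV. if j = j0 then d j - d' j else 0)"
      unfolding q_def coeff_sum coeff_monom
      by (intro sum.cong refl) (use idx(2) in \<open>auto simp: inj_eq\<close>)
    also have "\<dots> = d j0 - d' j0" by simp
    finally show ?thesis using j0 by auto
  qed
  have polyq: "poly (q d d') x = (\<Sum>j\<in>UNIV. (d j - d' j) * x ^ idx j)" for d d' x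
    unfolding q_def by (simp add: poly_sum poly_monom)
  define PR where "PR = {p. fst p \<in> D \<and> snd p \<in> D \<and> fst p \<noteq> snd p}"
  define R where "R = (\<Union>p\<in>PR. {x::int. poly (q (fst p) (snd p)) x = 0})"
  have "finite PR"
    by (rule finite_subset[of _ "D \<times> D"]) (auto simp: PR_def fin)
  then have fR: "finite R"
    unfolding R_def using qnz by (auto simp: PR_def intro!: poly_roots_finite)
  obtain B where B: "B \<notin> R" using ex_new_if_finite[OF infinite_UNIV_int fR] by blast
  define v where "v j = B ^ idx j" for j
  have "inj_on (\<lambda>d. idot d v) D"
  proof (rule inj_onI, rule ccontr)
    fix d d' assume d: "d \<in> D" "d' \<in> D" and eq: "idot d v = idot d' v" and ne: "d \<noteq> d'"
    have "poly (q d d') B = idot d v - idot d' v"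
      unfolding polyq idot_def v_def by (simp add: sum_subtractf left_diff_distrib)
    then have "poly (q d d') B = 0" using eq by simp
    then have "B \<in> R" using d ne unfolding R_def PR_def by force
    then show False using B by simp
  qed
  then show ?thesis by blast
qed

lemma ee_inj_grid:
  assumes N: "N > 0" and t: "t < N" and t': "t' < N" and eq: "ee (real t / real N) = ee (real t' / real N)"
  shows "t = t'"
proof -
  have "ee (real t / real N - real t' / real N) * ee (real t' / real N) = ee (real t / real N)"
    by (simp add: ee_add[symmetric])
  then have "ee (real t / real N - real t' / real N) = 1" using eq by (simp add: ee_def)
  then have "(real t - real t') / real N \<in> \<int>" by (simp add: ee_eq_1_iff diff_divide_distrib)
  then obtain k :: int where k: "(real t - real t') / real N = of_int k" by (auto elim: Ints_cases)
  then have k2: "real t - real t' = real N * of_int k" using N by (simp add: field_simps)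
  have "k = 0"
  proof (rule ccontr)
    assume "k \<noteq> 0"
    then have "1 \<le> \<bar>k\<bar>" by linarith
    then have "(1::real) \<le> \<bar>of_int k\<bar>" by (metis of_int_1_le_iff of_int_abs)
    then have "real N * 1 \<le> real N * \<bar>of_int k\<bar>" by (intro mult_left_mono) auto
    then have "\<bar>real N * of_int k\<bar> \<ge> real N" by (simp add: abs_mult)
    moreover have "\<bar>real t - real t'\<bar> < real N" using t t' by linarith
    ultimately show False using k2 by simp
  qed
  then show ?thesis using k2 by simp
qed

lemma roots_bound:
  fixes D :: "('m::finite \<Rightarrow> int) set"
  assumes fin: "finite D" and inj: "inj_on (\<lambda>d. idot d v) D" and d0: "d0 \<in> D" and c0: "c d0 \<noteq> 0"
    and N: "N > 0"
  shows "card {t\<in>{..<N}. Fc D c (\<lambda>j. \<theta> j + of_int (int t * v j) / real N) = 0} \<le> 2 * (\<Sum>d\<in>D. nat \<bar>idot d v\<bar>)"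
proof -
  define M where "M = (\<Sum>d\<in>D. nat \<bar>idot d v\<bar>)"
  have Mb: "\<bar>idot d v\<bar> \<le> int M" if "d \<in> D" for d
  proof -
    have "nat \<bar>idot d v\<bar> \<le> M" unfolding M_def using member_le_sum[of d D "\<lambda>d. nat \<bar>idot d v\<bar>"] that fin by simp
    then show ?thesis by linarith
  qed
  define b where "b d = c d * ee (dotr d \<theta>)" for d
  define p where "p = (\<Sum>d\<in>D. monom (b d) (nat (idot d v + int M)))"
  have bnz: "b d0 \<noteq> 0" using c0 by (simp add: b_def ee_def)
  have "coeff p (nat (idot d0 v + int M)) = (\<Sum>d\<in>D. if d = d0 then b d else 0)"
    unfolding p_def coeff_sum coeff_monom
  proof (intro sum.cong refl)
    fix d assume d: "d \<in> D"
    have "nat (idot d v + int M) = nat (idot d0 v + int M) \<longleftrightarrow> idot d v = idot d0 v"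
      using Mb[OF d] Mb[OF d0] by auto
    also have "\<dots> \<longleftrightarrow> d = d0" using inj d d0 by (auto dest: inj_onD)
    finally show "(if nat (idot d v + int M) = nat (idot d0 v + int M) then b d else 0) = (if d = d0 then b d else 0)"
      by simp
  qed
  also have "\<dots> = b d0" using fin d0 by simp
  finally have pnz: "p \<noteq> 0" using bnz by auto
  have deg: "degree p \<le> 2 * M"
    unfolding p_def
  proof (rule degree_sum_le[OF fin])
    fix d assume d: "d \<in> D"
    have "nat (idot d v + int M) \<le> 2 * M" using Mb[OF d] by linarith
    then show "degree (monom (b d) (nat (idot d v + int M))) \<le> 2 * M"
      using degree_monom_le order_trans by blast
  qed
  define z where "z t = ee (real t / real N)" for t :: nat
  have znz: "z t \<noteq> 0" for t by (simp add: z_def ee_def)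
  have Fz: "Fc D c (\<lambda>j. \<theta> j + of_int (int t * v j) / real N) = (\<Sum>d\<in>D. b d * z t powi idot d v)" for t
  proof -
    have i: "idot d (\<lambda>j. int t * v j) = int t * idot d v" for d
      unfolding idot_def by (simp add: sum_distrib_left mult_ac)
    have e: "ee (of_int (int t * idot d v) / real N) = z t powi idot d v" for d
      unfolding z_def ee_def cis_power_int by (rule arg_cong[where f=cis]) simp
    show ?thesis unfolding Fc_grid b_def i e ..
  qed
  have pz: "poly p (z t) = z t ^ M * Fc D c (\<lambda>j. \<theta> j + of_int (int t * v j) / real N)" for t
  proof -
    have "z t ^ nat (idot d v + int M) = z t powi idot d v * z t ^ M" if d: "d \<in> D" for d
    proof -
      have nn: "int (nat (idot d v + int M)) = idot d v + int M" using Mb[OF d] by simp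
      have "z t ^ nat (idot d v + int M) = z t powi int (nat (idot d v + int M))"
        by (rule power_int_of_nat[symmetric])
      also have "\<dots> = z t powi (idot d v + int M)" by (simp only: nn)
      also have "\<dots> = z t powi idot d v * z t powi int M" using znz by (simp add: power_int_add)
      finally show ?thesis by simp
    qed
    then show ?thesis unfolding p_def poly_sum poly_monom Fz
      by (simp add: sum_distrib_left mult_ac)
  qed
  have "card {t\<in>{..<N}. Fc D c (\<lambda>j. \<theta> j + of_int (int t * v j) / real N) = 0} \<le> card {x. poly p x = 0}"
  proof (rule card_inj_on_le[of z])
    show "inj_on z {t\<in>{..<N}. Fc D c (\<lambda>j. \<theta> j + of_int (int t * v j) / real N) = 0}"
    proof (rule inj_onI)
      fix x y assume "x \<in> {t\<in>{..<N}. Fc D c (\<lambda>j. \<theta> j + of_int (int t * v j) / real N) = 0}"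
        "y \<in> {t\<in>{..<N}. Fc D c (\<lambda>j. \<theta> j + of_int (int t * v j) / real N) = 0}" "z x = z y"
      then show "x = y" using ee_inj_grid[OF N, of x y] by (simp add: z_def)
    qed
    show "z ` {t\<in>{..<N}. Fc D c (\<lambda>j. \<theta> j + of_int (int t * v j) / real N) = 0} \<subseteq> {x. poly p x = 0}"
      using pz by auto
    show "finite {x. poly p x = 0}" using pnz by (rule poly_roots_finite)
  qed
  also have "\<dots> \<le> degree p" using pnz by (rule card_poly_roots_bound)
  also have "\<dots> \<le> 2 * M" by (rule deg)
  finally show ?thesis unfolding M_def .
qed

lemma zero_null:
  fixes D :: "('m::finite \<Rightarrow> int) set"
  assumes fin: "finite D" and nz: "\<exists>d\<in>D. c d \<noteq> 0"
  shows "measure PU {\<theta>\<in>space PU. Fc D c \<theta> = 0} = 0"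
proof -
  interpret prob_space "PU :: ('m \<Rightarrow> real) measure" by (rule prob_space_PU)
  obtain v where inj: "inj_on (\<lambda>d. idot d v) D" using exists_sep[OF fin] by blast
  obtain d0 where d0: "d0 \<in> D" "c d0 \<noteq> 0" using nz by blast
  define K where "K = real (2 * (\<Sum>d\<in>D. nat \<bar>idot d v\<bar>))"
  define \<mu> where "\<mu> = measure PU {\<theta>\<in>space PU. Fc D c \<theta> = 0}"
  have Zm: "{\<theta>\<in>space PU. Fc D c \<theta> = 0} \<in> sets PU" by measurable
  have bound: "real N * \<mu> \<le> K" if N: "N > 0" for N
  proof -
    define A where "A t = {\<theta>\<in>space PU. Fc D c (\<lambda>j. \<theta> j + of_int (int t * v j) / real N) = 0}" for t :: nat
    have Am: "A t \<in> sets PU" for t unfolding A_def Fc_def ee_def dotr_def by measurable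
    have eqm: "measure PU (A t) = \<mu>" for t
      unfolding A_def \<mu>_def
      by (rule PU_shift_measure[where Q = "\<lambda>\<theta>. Fc D c \<theta> = 0" and a = "\<lambda>j. of_int (int t * v j) / real N"])
         (use Zm in \<open>simp_all add: Fc_periodic\<close>)
    have "real N * \<mu> = (\<Sum>t\<in>{..<N}. measure PU (A t))" by (simp add: eqm)
    also have "\<dots> = integral\<^sup>L PU (\<lambda>\<theta>. \<Sum>t\<in>{..<N}. indicator (A t) \<theta>)"
      by (rule sum_measure_integral) (use Am in auto)
    also have "\<dots> \<le> K"
    proof (rule integral_le_const)
      show "integrable PU (\<lambda>\<theta>. \<Sum>t\<in>{..<N}. indicator (A t) \<theta> :: real)"
        using Am by (auto intro!: integrable_indicator simp: emeasure_eq_measure)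
      show "AE \<theta> in PU. (\<Sum>t\<in>{..<N}. indicator (A t) \<theta>) \<le> K"
      proof (rule AE_I2)
        fix \<theta> :: "'m \<Rightarrow> real" assume th: "\<theta> \<in> space PU"
        have "(\<Sum>t\<in>{..<N}. indicator (A t) \<theta> :: real) = real (card {t\<in>{..<N}. Fc D c (\<lambda>j. \<theta> j + of_int (int t * v j) / real N) = 0})"
          unfolding card_as_sum[OF finite_lessThan] using th by (intro sum.cong refl) (simp add: A_def indicator_def)
        also have "\<dots> \<le> K" unfolding K_def by (rule of_nat_mono[OF roots_bound[where \<theta>=\<theta> and c=c, OF fin inj d0(1) d0(2) N]])
        finally show "(\<Sum>t\<in>{..<N}. indicator (A t) \<theta>) \<le> K" .
      qed
    qed
    finally show ?thesis .
  qed
  have "\<mu> \<ge> 0" by (simp add: \<mu>_def)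
  moreover have "\<not> \<mu> > 0"
  proof
    assume pos: "\<mu> > 0"
    define N where "N = nat \<lceil>K / \<mu>\<rceil> + 1"
    have "K / \<mu> < real N" unfolding N_def by linarith
    then have "K < real N * \<mu>" using pos by (simp add: field_simps)
    moreover have "real N * \<mu> \<le> K" by (rule bound) (simp add: N_def)
    ultimately show False by simp
  qed
  ultimately show ?thesis unfolding \<mu>_def by linarith
qed

lemma indep_fin: "finite {S. circ_independent D n S}"
  by (rule finite_subset[of _ "Pow (circ_vertices n)"]) (auto simp: circ_independent_def finite_circ_vertices)

lemma indep_empty: "circ_independent D n {}"
  by (simp add: circ_independent_def)

lemma alpha_ex: "\<exists>S. circ_independent D n S \<and> card S = circ_alpha D n"
proof -
  have "circ_alpha D n \<in> card ` {S. circ_independent D n S}"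
    unfolding circ_alpha_def using indep_fin[of D n] indep_empty[of D n] by (intro Max_in) auto
  then show ?thesis by auto
qed

lemma alpha_ge: "circ_independent D n S \<Longrightarrow> card S \<le> circ_alpha D n"
  unfolding circ_alpha_def using indep_fin[of D n] by (intro Max_ge) auto

lemma alpha_le: "circ_alpha D n \<le> n ^ CARD('m)" for D :: "('m::finite \<Rightarrow> int) set"
proof -
  obtain S where S: "circ_independent D n S" "card S = circ_alpha D n" using alpha_ex by blast
  then have "card S \<le> card (circ_vertices n :: ('m \<Rightarrow> int) set)"
    by (intro card_mono finite_circ_vertices) (auto simp: circ_independent_def)
  then show ?thesis using S by (simp add: card_circ_vertices)
qed

lemma Fc_neg: "Fc D (\<lambda>d. - c d) \<theta> = - Fc D c \<theta>"
  unfolding Fc_def by (simp add: sum_negf)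

lemma alpha_rho:
  fixes D :: "('m::finite \<Rightarrow> int) set" and c :: "('m \<Rightarrow> int) \<Rightarrow> complex"
  assumes fin: "finite D" and sym: "\<forall>d\<in>D. (\<lambda>j. - d j) \<in> D" and cc: "\<forall>d\<in>D. c (\<lambda>j. - d j) = cnj (c d)"
    and nz: "\<exists>d\<in>D. c d \<noteq> 0" and N: "N > 0"
  shows "real (circ_alpha D N) / real N ^ CARD('m) \<le> min (rho_plus (laurent D c)) (rho_minus (laurent D c))"
proof -
  obtain S where S: "circ_independent D N S" "card S = circ_alpha D N" using alpha_ex by blast
  have SG: "S \<subseteq> circ_vertices N" and ind: "\<forall>s\<in>S. \<forall>t\<in>S. \<not> circ_adj D N s t"
    using S(1) by (auto simp: circ_independent_def)
  have Np: "real N ^ CARD('m) > 0" using N by simp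
  have 1: "real (card S) \<le> real N ^ CARD('m) * rho_plus (laurent D c)"
    unfolding rho_plus_eq by (rule alpha_N_bound[OF fin sym cc N SG ind zero_null[OF fin nz]])
  have cc': "\<forall>d\<in>D. - c (\<lambda>j. - d j) = cnj (- c d)" using cc by simp
  have nz': "\<exists>d\<in>D. - c d \<noteq> 0" using nz by simp
  have "real (card S) \<le> real N ^ CARD('m) * measure PU {\<theta>\<in>space PU. Re (Fc D (\<lambda>d. - c d) \<theta>) > 0}"
    by (rule alpha_N_bound[OF fin sym cc' N SG ind zero_null[OF fin nz']])
  also have "{\<theta>\<in>space PU. Re (Fc D (\<lambda>d. - c d) \<theta>) > 0} = {\<theta>\<in>space PU. Re (Fc D c \<theta>) < 0}"
    by (auto simp: Fc_neg)
  finally have 2: "real (card S) \<le> real N ^ CARD('m) * rho_minus (laurent D c)"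
    unfolding rho_minus_eq .
  show ?thesis using 1 2 Np S(2) by (auto simp: pos_divide_le_eq mult.commute)
qed

lemma divmod_unique:
  fixes q s :: int assumes "0 \<le> s" "s < int n"
  shows "(q * int n + s) div int n = q" "(q * int n + s) mod int n = s"
  using assms by (simp_all add: add.commute)

lemma lift:
  fixes D :: "('m::finite \<Rightarrow> int) set"
  assumes n: "n > 0" and R: "\<forall>d\<in>D. \<forall>j. \<bar>d j\<bar> \<le> int R" and S: "circ_independent D n S"
    and LN: "L * n + R \<le> N"
  shows "L ^ CARD('m) * card S \<le> circ_alpha D N"
proof -
  define Q where "Q = (circ_vertices L :: ('m \<Rightarrow> int) set)"
  define f where "f = (\<lambda>(q, s). \<lambda>j::'m. q j * int n + s j)"
  have SG: "S \<subseteq> circ_vertices n" and ind: "\<forall>s\<in>S. \<forall>t\<in>S. \<not> circ_adj D n s t"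
    using S by (auto simp: circ_independent_def)
  have fS: "finite S" using SG finite_circ_vertices finite_subset by blast
  have sb: "0 \<le> s j" "s j < int n" if "s \<in> S" for s j using SG that by (auto simp: circ_vertices_def)
  have qb: "0 \<le> q j" "q j < int L" if "q \<in> Q" for q j using that by (auto simp: Q_def circ_vertices_def)
  have inj: "inj_on f (Q \<times> S)"
  proof (rule inj_onI)
    fix x y assume x: "x \<in> Q \<times> S" and y: "y \<in> Q \<times> S" and e: "f x = f y"
    obtain q s where qs: "x = (q, s)" by force
    obtain q' s' where qs': "y = (q', s')" by force
    have s: "s \<in> S" "s' \<in> S" using x y qs qs' by auto
    have "q j = q' j \<and> s j = s' j" for j
    proof -
      have ej: "q j * int n + s j = q' j * int n + s' j" using e qs qs' by (auto simp: f_def fun_eq_iff)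
      show ?thesis using divmod_unique[OF sb[OF s(1)], of "q j"] divmod_unique[OF sb[OF s(2)], of "q' j"] ej by metis
    qed
    then show "x = y" using qs qs' by (auto simp: fun_eq_iff)
  qed
  have cardS': "card (f ` (Q \<times> S)) = L ^ CARD('m) * card S"
    using card_image[OF inj] by (simp add: card_cartesian_product Q_def card_circ_vertices)
  have coord: "0 \<le> x j \<and> x j < int L * int n" if xin: "x \<in> f ` (Q \<times> S)" for x j
  proof -
    obtain q s where q: "q \<in> Q" and s: "s \<in> S" and x: "x = f (q, s)" using xin by auto
    have "q j * int n + s j < (q j + 1) * int n" using sb[OF s, of j] by (simp add: algebra_simps)
    also have "\<dots> \<le> int L * int n" using qb[OF q, of j] n by (intro mult_right_mono) auto
    finally show ?thesis using x qb[OF q, of j] sb[OF s, of j] by (simp add: f_def)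
  qed
  have indep: "circ_independent D N (f ` (Q \<times> S))"
    unfolding circ_independent_def
  proof (intro conjI ballI)
    show "f ` (Q \<times> S) \<subseteq> circ_vertices N"
    proof
      fix x assume x: "x \<in> f ` (Q \<times> S)"
      have "int L * int n \<le> int N" using LN by (metis add_leD1 of_nat_le_iff of_nat_mult)
      then show "x \<in> circ_vertices N" using coord[OF x] unfolding circ_vertices_def
        by (smt (verit) mem_Collect_eq)
    qed
  next
    fix u v assume u: "u \<in> f ` (Q \<times> S)" and v: "v \<in> f ` (Q \<times> S)"
    show "\<not> circ_adj D N u v"
    proof
      assume "circ_adj D N u v"
      then obtain d where d: "d \<in> D" and m: "\<forall>j. (u j - v j) mod int N = d j mod int N"
        unfolding circ_adj_def by blast
      obtain qu su where qu: "qu \<in> Q" "su \<in> S" "u = f (qu, su)" using u by auto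
      obtain qv sv where qv: "qv \<in> Q" "sv \<in> S" "v = f (qv, sv)" using v by auto
      have eq: "u j - v j = d j" for j
      proof -
        have "int N dvd (u j - v j - d j)" using m[rule_format, of j] by (simp add: mod_eq_dvd_iff)
        moreover have "\<bar>u j - v j - d j\<bar> < int N"
        proof -
          have "int L * int n + int R \<le> int N" using LN by (metis of_nat_add of_nat_le_iff of_nat_mult)
          moreover have "\<bar>d j\<bar> \<le> int R" using R d by blast
          ultimately show ?thesis using coord[OF u, of j] coord[OF v, of j] by linarith
        qed
        ultimately show ?thesis using dvd_small by fastforce
      qed
      have "(su j - sv j) mod int n = d j mod int n" for j
      proof -
        have "u j - v j = (qu j - qv j) * int n + (su j - sv j)" using qu(3) qv(3) by (simp add: f_def algebra_simps)
        then have "(u j - v j) mod int n = (su j - sv j) mod int n" by (simp add: add.commute)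
        then show ?thesis using eq[of j] by simp
      qed
      then have "circ_adj D n su sv" unfolding circ_adj_def using d by blast
      then show False using ind qu(2) qv(2) by blast
    qed
  qed
  show ?thesis using alpha_ge[OF indep] cardS' by simp
qed

lemma alpha_conv:
  fixes D :: "('m::finite \<Rightarrow> int) set"
  assumes fin: "finite D"
  shows "convergent (\<lambda>N. real (circ_alpha D N) / real N ^ CARD('m))"
proof -
  define X where "X N = real (circ_alpha D N) / real N ^ CARD('m)" for N
  define m where "m = CARD('m)"
  define R where "R = nat (\<Sum>d\<in>D. \<Sum>j\<in>UNIV. \<bar>d j\<bar>)"
  have Rb: "\<forall>d\<in>D. \<forall>j. \<bar>d j\<bar> \<le> int R"
  proof (intro ballI allI)
    fix d j assume d: "d \<in> D"
    have "\<bar>d j\<bar> \<le> (\<Sum>j\<in>UNIV. \<bar>d j\<bar>)" by (rule member_le_sum) auto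
    also have "\<dots> \<le> (\<Sum>d\<in>D. \<Sum>j\<in>UNIV. \<bar>d j\<bar>)"
      using member_le_sum[of d D "\<lambda>d. \<Sum>j\<in>UNIV. \<bar>d j\<bar>"] d fin by (simp add: sum_nonneg)
    finally show "\<bar>d j\<bar> \<le> int R" unfolding R_def by linarith
  qed
  have X0: "0 \<le> X N" for N by (simp add: X_def)
  have X1: "X N \<le> 1" for N
  proof (cases "N = 0")
    case True
    have "CARD('m) > 0" by simp
    then have z: "real N ^ CARD('m) = 0" using True by (simp add: power_0_left)
    show ?thesis unfolding X_def z by simp
  next
    case False
    have "real (circ_alpha D N) \<le> real N ^ CARD('m)"
      using alpha_le[of D N] by (metis of_nat_le_iff of_nat_power)
    then show ?thesis using False by (simp add: X_def divide_le_eq_1)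
  qed
  have Xz: "X 0 = 0"
  proof -
    have "CARD('m) > 0" by simp
    then have z: "real 0 ^ CARD('m) = 0" by (simp add: power_0_left)
    show ?thesis unfolding X_def z by simp
  qed
  define s where "s = Sup (range X)"
  have bdd: "bdd_above (range X)" using X1 by (intro bdd_aboveI[where M=1]) auto
  have Xs: "X N \<le> s" for N unfolding s_def using bdd by (intro cSup_upper) auto
  have "X \<longlonglongrightarrow> s"
  proof (rule LIMSEQ_I)
    fix r :: real assume r: "r > 0"
    have "s - r / 2 < s" using r by simp
    then obtain n where n: "s - r / 2 < X n" unfolding s_def by (rule less_cSupE) auto
    show "\<exists>no. \<forall>N\<ge>no. norm (X N - s) < r"
    proof (cases "n = 0")
      case True
      then have "s < r / 2" using n Xz by simp
      then have "norm (X N - s) < r" for N using Xs[of N] X0[of N] r by simp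
      then show ?thesis by blast
    next
      case False
      then have np: "n > 0" by simp
      define c where "c = real (R + n)"
      have "(\<lambda>N. (1 - c / real N) ^ m * X n) \<longlonglongrightarrow> (1 - 0) ^ m * X n"
        by (intro tendsto_intros lim_const_over_n)
      then have "eventually (\<lambda>N. s - r < (1 - c / real N) ^ m * X n) sequentially"
        using n r by (intro order_tendstoD(1)) auto
      then obtain no1 where no1: "\<And>N. N \<ge> no1 \<Longrightarrow> s - r < (1 - c / real N) ^ m * X n"
        unfolding eventually_sequentially by blast
      have "\<forall>N\<ge>max no1 (R + n + 1). norm (X N - s) < r"
      proof (intro allI impI)
        fix N assume N: "N \<ge> max no1 (R + n + 1)"
        then have Np: "N > 0" and NR: "N \<ge> R + n" by auto
        define L where "L = (N - R) div n"
        have LN: "L * n + R \<le> N" unfolding L_def using NR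
          by (metis add.commute add_le_cancel_left div_mult_self_is_m le_add_diff_inverse div_times_less_eq_dividend le_trans add_leD1 order_refl nat_le_linear)
        have Lge: "real (L * n) \<ge> real N - c"
        proof -
          have "N - R = L * n + (N - R) mod n" unfolding L_def by simp
          moreover have "(N - R) mod n < n" using np by simp
          ultimately have "N - R < L * n + n" by linarith
          then show ?thesis unfolding c_def using NR by linarith
        qed
        obtain S0 where S0: "circ_independent D n S0" "card S0 = circ_alpha D n" using alpha_ex by blast
        have "L ^ m * circ_alpha D n \<le> circ_alpha D N"
          using lift[OF np Rb S0(1) LN] S0(2) by (simp add: m_def)
        then have lift': "real (L ^ m * circ_alpha D n) \<le> real (circ_alpha D N)"
          by (rule of_nat_mono)
        have Nr: "real N > 0" using Np by simp
        have cN: "0 \<le> 1 - c / real N" using NR Nr by (simp add: c_def field_simps)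
        have "1 - c / real N = (real N - c) / real N" using Nr by (simp add: field_simps)
        also have "\<dots> \<le> real (L * n) / real N" using Lge Nr by (intro divide_right_mono) auto
        finally have "1 - c / real N \<le> real (L * n) / real N" .
        then have "(1 - c / real N) ^ m \<le> (real (L * n) / real N) ^ m" using cN by (rule power_mono)
        then have "(1 - c / real N) ^ m * X n \<le> (real (L * n) / real N) ^ m * X n"
          using X0 by (rule mult_right_mono)
        also have "\<dots> = real (L ^ m * circ_alpha D n) / real N ^ m"
          using np Nr by (simp add: X_def m_def power_divide power_mult_distrib field_simps)
        also have "\<dots> \<le> X N" unfolding X_def m_def[symmetric] using lift' Nr
          by (intro divide_right_mono) auto
        finally have "s - r < X N" using no1[of N] N by simp
        then show "norm (X N - s) < r" using Xs[of N] by simp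
      qed
      then show ?thesis by blast
    qed
  qed
  then show ?thesis unfolding X_def convergent_def by blast
qed

theorem theorem7:
  fixes D :: "('m::finite \<Rightarrow> int) set" and c :: "('m \<Rightarrow> int) \<Rightarrow> complex"
  assumes "finite D" and "(\<lambda>_. 0) \<notin> D" and "\<forall>d\<in>D. (\<lambda>j. - d j) \<in> D"
    and "\<forall>d\<in>D. c (\<lambda>j. - d j) = cnj (c d)"
    and "\<exists>d\<in>D. c d \<noteq> 0"
  shows "alpha_D D \<le> min (rho_plus (laurent D c)) (rho_minus (laurent D c))"
proof -
  have "(\<lambda>N. real (circ_alpha D N) / real N ^ CARD('m)) \<longlonglongrightarrow> alpha_D D"
    unfolding alpha_D_def using alpha_conv[OF assms(1)] by (simp add: convergent_LIMSEQ_iff)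
  moreover have "\<forall>N\<ge>1. real (circ_alpha D N) / real N ^ CARD('m) \<le> min (rho_plus (laurent D c)) (rho_minus (laurent D c))"
    using alpha_rho[OF assms(1) assms(3) assms(4) assms(5)] by simp
  ultimately show ?thesis by (intro LIMSEQ_le_const2) blast+
qed

end
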